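(* Let $G=(V,E)$ be a multigraph with a spanning forest $F\subseteq E$, and let $\Delta\ge1$. Suppose the endpoints of the edges in $E\setminus F$ are distinct vertices, any two of which are at distance at least $\Delta$ in $F$. Then every Eulerian subgraph $E^*\subseteq E$ satisfies $|E^*|\ge\Delta\cdot|E^*\setminus F|$.
   Context: A subgraph (edge set) $E^*\subseteq E$ is Eulerian if every vertex has even degree in $E^*$. A spanning forest is a maximal acyclic subset of $E$; distances in $F$ are shortest-path distances in the forest $F$. *)

theory Defs
  imports Main "HOL-Library.Extended_Nat"
begin

text \<open>A multigraph is given by a finite vertex set V, a finite edge set E and
  an endpoint assignment: edge e joins src e and tgt e (loops and parallel
  edges allowed; the orientation is irrelevant).\<close>

definition multigraph :: "'v set \<Rightarrow> 'e set \<Rightarrow> ('e \<Rightarrow> 'v) \<Rightarrow> ('e \<Rightarrow> 'v) \<Rightarrow> bool" where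
  "multigraph V E src tgt \<longleftrightarrow> finite V \<and> finite E \<and>
     (\<forall>e\<in>E. src e \<in> V \<and> tgt e \<in> V)"

definition walk :: "('e \<Rightarrow> 'v) \<Rightarrow> ('e \<Rightarrow> 'v) \<Rightarrow> 'e set \<Rightarrow> 'v list \<Rightarrow> 'e list \<Rightarrow> bool" where
  "walk src tgt A vs es \<longleftrightarrow> length vs = Suc (length es) \<and>
     (\<forall>i < length es. es ! i \<in> A \<and> {src (es ! i), tgt (es ! i)} = {vs ! i, vs ! Suc i})"

definition has_cycle :: "('e \<Rightarrow> 'v) \<Rightarrow> ('e \<Rightarrow> 'v) \<Rightarrow> 'e set \<Rightarrow> bool" where
  "has_cycle src tgt A \<longleftrightarrow> (\<exists>vs es. walk src tgt A vs es \<and> es \<noteq> [] \<and> distinct es \<and> hd vs = last vs)"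

definition acyclic_edges :: "('e \<Rightarrow> 'v) \<Rightarrow> ('e \<Rightarrow> 'v) \<Rightarrow> 'e set \<Rightarrow> bool" where
  "acyclic_edges src tgt A \<longleftrightarrow> \<not> has_cycle src tgt A"

definition spanning_forest :: "'e set \<Rightarrow> ('e \<Rightarrow> 'v) \<Rightarrow> ('e \<Rightarrow> 'v) \<Rightarrow> 'e set \<Rightarrow> bool" where
  "spanning_forest E src tgt F \<longleftrightarrow> F \<subseteq> E \<and> acyclic_edges src tgt F \<and>
     (\<forall>e \<in> E - F. \<not> acyclic_edges src tgt (insert e F))"

text \<open>Shortest-path distance in the edge set F (infinity if no path).\<close>
definition edist :: "('e \<Rightarrow> 'v) \<Rightarrow> ('e \<Rightarrow> 'v) \<Rightarrow> 'e set \<Rightarrow> 'v \<Rightarrow> 'v \<Rightarrow> enat" where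
  "edist src tgt F u v = (INF es \<in> {es. \<exists>vs. walk src tgt F vs es \<and> hd vs = u \<and> last vs = v}.
      enat (length es))"

text \<open>Degree of v in the edge set A (a loop counts twice).\<close>
definition deg :: "('e \<Rightarrow> 'v) \<Rightarrow> ('e \<Rightarrow> 'v) \<Rightarrow> 'e set \<Rightarrow> 'v \<Rightarrow> nat" where
  "deg src tgt A v = card {e \<in> A. src e = v} + card {e \<in> A. tgt e = v}"

definition eulerian :: "'v set \<Rightarrow> ('e \<Rightarrow> 'v) \<Rightarrow> ('e \<Rightarrow> 'v) \<Rightarrow> 'e set \<Rightarrow> bool" where
  "eulerian V src tgt A \<longleftrightarrow> (\<forall>v \<in> V. even (deg src tgt A v))"

end

theory Submission imports Defs begin

lemma walk_Nil: "walk src tgt A vs [] \<longleftrightarrow> (\<exists>v. vs = [v])"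
  unfolding walk_def by (auto simp: length_Suc_conv)

lemma walk_Cons: "walk src tgt A (u#vs) (e#es) \<longleftrightarrow>
   vs \<noteq> [] \<and> e \<in> A \<and> {src e, tgt e} = {u, hd vs} \<and> walk src tgt A vs es"
  unfolding walk_def
  by (cases vs) (auto simp: All_less_Suc2)

lemma walk_Nil_vs: "\<not> walk src tgt A [] es"
  unfolding walk_def by auto

lemma walk_append:
  "walk src tgt A vs es \<Longrightarrow> walk src tgt A ws fs \<Longrightarrow> last vs = hd ws \<Longrightarrow>
   walk src tgt A (vs @ tl ws) (es @ fs) \<and> hd (vs @ tl ws) = hd vs \<and> last (vs @ tl ws) = last ws"
proof (induction es arbitrary: vs)
  case Nil
  then obtain v where v: "vs = [v]" by (auto simp: walk_Nil)
  have "ws \<noteq> []" using Nil(2) walk_Nil_vs by metis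
  then show ?case using Nil v by (cases ws) auto
next
  case (Cons e es)
  then obtain u vs' where vs: "vs = u # vs'" by (cases vs) (auto simp: walk_Nil_vs)
  have w: "vs' \<noteq> [] \<and> e \<in> A \<and> {src e, tgt e} = {u, hd vs'} \<and> walk src tgt A vs' es"
    using Cons(2) vs walk_Cons by metis
  have ws: "ws \<noteq> []" using Cons(3) walk_Nil_vs by metis
  have IH: "walk src tgt A (vs' @ tl ws) (es @ fs) \<and> hd (vs' @ tl ws) = hd vs' \<and> last (vs' @ tl ws) = last ws"
    using Cons.IH w Cons(3,4) vs by simp
  show ?case using IH w vs ws by (simp add: walk_Cons)
qed

lemma walk_rev: "walk src tgt A vs es \<Longrightarrow> walk src tgt A (rev vs) (rev es)"
proof (induction es arbitrary: vs)
  case Nil thus ?case by (auto simp: walk_Nil)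
next
  case (Cons e es)
  then obtain u vs' where vs: "vs = u # vs'" by (cases vs) (auto simp: walk_Nil_vs)
  have w: "vs' \<noteq> [] \<and> e \<in> A \<and> {src e, tgt e} = {u, hd vs'} \<and> walk src tgt A vs' es"
    using Cons(2) vs walk_Cons by metis
  have r: "walk src tgt A (rev vs') (rev es)" using Cons.IH w by blast
  have "walk src tgt A [hd vs', u] [e]" using w by (auto simp: walk_Cons walk_Nil insert_commute)
  from walk_append[OF r this] w
  show ?case using vs by (simp add: last_rev)
qed

lemma edist_le: "walk src tgt A vs es \<Longrightarrow> hd vs = u \<Longrightarrow> last vs = v \<Longrightarrow>
   edist src tgt A u v \<le> enat (length es)"
  unfolding edist_def by (rule INF_lower) blast

lemma edist_obtain: "edist src tgt A u v = enat n \<Longrightarrow>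
   \<exists>vs es. walk src tgt A vs es \<and> hd vs = u \<and> last vs = v \<and> length es = n"
proof -
  assume a: "edist src tgt A u v = enat n"
  let ?S = "{es. \<exists>vs. walk src tgt A vs es \<and> hd vs = u \<and> last vs = v}"
  have "?S \<noteq> {}"
  proof
    assume e: "?S = {}"
    have "edist src tgt A u v = Inf ((\<lambda>es. enat (length es)) ` ?S)" unfolding edist_def by simp
    also have "\<dots> = \<infinity>" unfolding e by (simp add: Inf_enat_def)
    finally have "edist src tgt A u v = \<infinity>" .
    with a show False by simp
  qed
  let ?I = "(\<lambda>es. enat (length es)) ` ?S"
  have ne: "?I \<noteq> {}" using \<open>?S \<noteq> {}\<close> by blast
  then obtain x where x: "x \<in> ?I" by blast
  have "Inf ?I = (LEAST y. y \<in> ?I)" unfolding Inf_enat_def by (rule if_not_P[OF ne])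
  hence "Inf ?I \<in> ?I" using LeastI[of "\<lambda>y. y \<in> ?I", OF x] by simp
  thus ?thesis using a unfolding edist_def by force
qed

lemma edist_refl: "edist src tgt A u u = 0"
proof -
  have "walk src tgt A [u] []" by (simp add: walk_Nil)
  from edist_le[OF this] show ?thesis by (simp add: enat_0)
qed

lemma edist_sym: "edist src tgt A u v \<le> edist src tgt A v u"
proof (cases "edist src tgt A v u")
  case (enat n)
  then obtain vs es where w: "walk src tgt A vs es" "hd vs = v" "last vs = u" "length es = n"
    using edist_obtain by metis
  have ne: "vs \<noteq> []" using w(1) walk_Nil_vs by metis
  show ?thesis using edist_le[OF walk_rev[OF w(1)]] w ne enat by (simp add: hd_rev last_rev)
qed simp

lemma edist_sym': "edist src tgt A u v = edist src tgt A v u"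
  using edist_sym by (metis antisym)

lemma edist_tri: "edist src tgt A u w \<le> edist src tgt A u v + edist src tgt A v w"
proof (cases "edist src tgt A u v")
  case (enat n)
  show ?thesis
  proof (cases "edist src tgt A v w")
    case (enat m)
    obtain vs es where w1: "walk src tgt A vs es" "hd vs = u" "last vs = v" "length es = n"
      using edist_obtain \<open>edist src tgt A u v = enat n\<close> by metis
    obtain ws fs where w2: "walk src tgt A ws fs" "hd ws = v" "last ws = w" "length fs = m"
      using edist_obtain enat by metis
    have "walk src tgt A (vs @ tl ws) (es @ fs) \<and> hd (vs @ tl ws) = hd vs \<and> last (vs @ tl ws) = last ws"
      using walk_append w1 w2 by metis
    from edist_le[OF conjunct1[OF this]] this w1 w2 enat \<open>edist src tgt A u v = enat n\<close>
    show ?thesis by simp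
  qed simp
qed simp

lemma edist_edge: "e \<in> A \<Longrightarrow> edist src tgt A (src e) (tgt e) \<le> 1"
proof -
  assume "e \<in> A"
  hence "walk src tgt A [src e, tgt e] [e]" by (simp add: walk_Cons walk_Nil)
  from edist_le[OF this] show ?thesis by (simp add: one_enat_def)
qed

lemma walk_mono: "A \<subseteq> B \<Longrightarrow> walk src tgt A vs es \<Longrightarrow> walk src tgt B vs es"
  unfolding walk_def by blast

lemma edist_mono: "A \<subseteq> B \<Longrightarrow> edist src tgt B u v \<le> edist src tgt A u v"
  unfolding edist_def
proof (rule INF_mono)
  assume AB: "A \<subseteq> B"
  fix es assume "es \<in> {es. \<exists>vs. walk src tgt A vs es \<and> hd vs = u \<and> last vs = v}"
  then have "es \<in> {es. \<exists>vs. walk src tgt B vs es \<and> hd vs = u \<and> last vs = v}"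
    using walk_mono[OF AB] by blast
  then show "\<exists>es'\<in>{es. \<exists>vs. walk src tgt B vs es \<and> hd vs = u \<and> last vs = v}.
     enat (length es') \<le> enat (length es)" by blast
qed

lemma edist_fin_endpoint: "edist src tgt A t v = enat n \<Longrightarrow> v = t \<or> v \<in> src ` A \<or> v \<in> tgt ` A"
proof -
  assume "edist src tgt A t v = enat n"
  then obtain vs es where w: "walk src tgt A vs es" "hd vs = t" "last vs = v" "length es = n"
    using edist_obtain by metis
  show ?thesis
  proof (cases es rule: rev_cases)
    case Nil then show ?thesis using w by (auto simp: walk_Nil)
  next
    case (snoc es' e)
    have "length vs = Suc (length es)" using w(1) walk_def by metis
    hence lv: "last vs = vs ! length es" by (metis diff_Suc_1 last_conv_nth list.size(3) nat.distinct(1))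
    have "e \<in> A \<and> {src e, tgt e} = {vs ! length es', vs ! Suc (length es')}"
      using w(1) snoc unfolding walk_def by (metis length_append_singleton lessI nth_append_length)
    then show ?thesis using lv w snoc by auto
  qed
qed

lemma sum_card_fiber: "finite A \<Longrightarrow> finite S \<Longrightarrow>
  (\<Sum>v\<in>S. card {e\<in>A. f e = v}) = card {e\<in>A. f e \<in> S}"
proof -
  assume fA: "finite A" and fS: "finite S"
  have "{e\<in>A. f e \<in> S} = (\<Union>v\<in>S. {e\<in>A. f e = v})" by auto
  moreover have "card (\<Union>v\<in>S. {e\<in>A. f e = v}) = (\<Sum>v\<in>S. card {e\<in>A. f e = v})"
    using fA fS by (intro card_UN_disjoint) auto
  ultimately show ?thesis by simp
qed


lemma deg_split: "finite B \<Longrightarrow> B \<inter> C = {} \<Longrightarrow> finite C \<Longrightarrow>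
   deg src tgt (B \<union> C) v = deg src tgt B v + deg src tgt C v"
proof -
  assume f: "finite B" "B \<inter> C = {}" "finite C"
  have 1: "card {e \<in> B \<union> C. src e = v} = card {e\<in>B. src e = v} + card {e\<in>C. src e = v}"
    using f by (subst card_Un_disjoint[symmetric]) (auto intro: arg_cong[where f=card])
  have 2: "card {e \<in> B \<union> C. tgt e = v} = card {e\<in>B. tgt e = v} + card {e\<in>C. tgt e = v}"
    using f by (subst card_Un_disjoint[symmetric]) (auto intro: arg_cong[where f=card])
  show ?thesis unfolding deg_def using 1 2 by simp
qed

theorem mainTheorem18:
  fixes V :: "'v set" and E :: "'e set" and src tgt :: "'e \<Rightarrow> 'v"
    and F :: "'e set" and \<Delta> :: nat
  assumes "multigraph V E src tgt"
    and "spanning_forest E src tgt F"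
    and "\<Delta> \<ge> 1"
    and "\<forall>e \<in> E - F. src e \<noteq> tgt e"
    and "\<forall>e \<in> E - F. \<forall>e' \<in> E - F. e \<noteq> e' \<longrightarrow> {src e, tgt e} \<inter> {src e', tgt e'} = {}"
    and "\<forall>u \<in> (\<Union>e \<in> E - F. {src e, tgt e}). \<forall>v \<in> (\<Union>e \<in> E - F. {src e, tgt e}).
           u \<noteq> v \<longrightarrow> edist src tgt F u v \<ge> enat \<Delta>"
    and "Estar \<subseteq> E"
    and "eulerian V src tgt Estar"
  shows "card Estar \<ge> \<Delta> * card (Estar - F)"
proof -
  note mg = assms(1)[unfolded multigraph_def]
  define N where "N = Estar - F"
  define A where "A = Estar \<inter> F"
  define T where "T = (\<Union>e \<in> N. {src e, tgt e})"
  define d where "d = edist src tgt A"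
  define L where "L = \<Delta> div 2"
  have fE: "finite Estar" using mg assms(7) finite_subset by blast
  have fN: "finite N" "finite A" using fE N_def A_def by auto
  have NE: "N \<subseteq> E - F" using assms(7) N_def by auto
  have EU: "Estar = A \<union> N" "A \<inter> N = {}" using A_def N_def by auto
  have cardE: "card Estar = card A + card N" using EU fN card_Un_disjoint by metis
  have ev: "even (deg src tgt Estar v)" for v
  proof (cases "v \<in> V")
    case True then show ?thesis using assms(8) eulerian_def by metis
  next
    case False
    have q: "{e \<in> Estar. src e = v} = {}" "{e \<in> Estar. tgt e = v} = {}"
      using False mg assms(7) by auto
    show ?thesis unfolding deg_def by (simp only: q card.empty) simp
  qed
  have degN: "deg src tgt N v = (if v \<in> T then 1 else 0)" for v
  proof (cases "v \<in> T")
    case True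
    then obtain e0 where e0: "e0 \<in> N" "v = src e0 \<or> v = tgt e0" unfolding T_def by auto
    have uniq: "\<And>e. e \<in> N \<Longrightarrow> v = src e \<or> v = tgt e \<Longrightarrow> e = e0"
      using assms(5) NE e0 by blast
    have nl: "src e0 \<noteq> tgt e0" using assms(4) NE e0 by blast
    show ?thesis
    proof (cases "v = src e0")
      case True
      have "{e \<in> N. src e = v} = {e0}"
      proof
        show "{e \<in> N. src e = v} \<subseteq> {e0}" using uniq by blast
        show "{e0} \<subseteq> {e \<in> N. src e = v}" using e0 True by simp
      qed
      moreover have "{e \<in> N. tgt e = v} = {}"
      proof -
        { fix e assume "e \<in> N" "tgt e = v"
          hence "e = e0" using uniq by blast
          hence False using \<open>tgt e = v\<close> True nl by simp }
        thus ?thesis by blast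
      qed
      ultimately have "{e \<in> N. src e = v} = {e0}" "{e \<in> N. tgt e = v} = {}" by blast+
      note q = this
      show ?thesis unfolding deg_def using \<open>v \<in> T\<close> by (simp only: q card.empty) simp
    next
      case False
      have vt: "v = tgt e0" using e0 False by blast
      have "{e \<in> N. tgt e = v} = {e0}"
      proof
        show "{e \<in> N. tgt e = v} \<subseteq> {e0}" using uniq by blast
        show "{e0} \<subseteq> {e \<in> N. tgt e = v}" using e0 vt by simp
      qed
      moreover have "{e \<in> N. src e = v} = {}"
      proof -
        { fix e assume "e \<in> N" "src e = v"
          hence "e = e0" using uniq by blast
          hence False using \<open>src e = v\<close> False by simp }
        thus ?thesis by blast
      qed
      ultimately have "{e \<in> N. src e = v} = {}" "{e \<in> N. tgt e = v} = {e0}" by blast+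
      note q = this
      show ?thesis unfolding deg_def using \<open>v \<in> T\<close> by (simp only: q card.empty) simp
    qed
  next
    case False
    have "{e \<in> N. src e = v} = {}" "{e \<in> N. tgt e = v} = {}"
      using False unfolding T_def by auto
    note q = this
    show ?thesis unfolding deg_def using False by (simp only: q card.empty) simp
  qed
  have oddA: "odd (deg src tgt A v) \<longleftrightarrow> v \<in> T" for v
    using ev[of v] degN[of v] deg_split[OF fN(2) EU(2) fN(1), of src tgt v] EU(1) by auto
  have cardT: "card T = 2 * card N"
  proof -
    have "card T = (\<Sum>e\<in>N. card {src e, tgt e})" unfolding T_def
      using fN(1) assms(5) NE by (intro card_UN_disjoint) auto
    also have "\<dots> = (\<Sum>e\<in>N. 2)" using assms(4) NE by (intro sum.cong) auto
    finally show ?thesis by simp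
  qed
  have far: "enat \<Delta> \<le> d t t'" if "t \<in> T" "t' \<in> T" "t \<noteq> t'" for t t'
  proof -
    have "enat \<Delta> \<le> edist src tgt F t t'" using assms(6) that NE unfolding T_def by blast
    also have "\<dots> \<le> d t t'" unfolding d_def by (rule edist_mono) (auto simp: A_def)
    finally show ?thesis .
  qed
  have layer: "\<exists>e\<in>A. (d t (src e) = enat r \<and> d t (tgt e) = enat (Suc r)) \<or>
                      (d t (tgt e) = enat r \<and> d t (src e) = enat (Suc r))"
    if t: "t \<in> T" and r: "r < L" for t r
  proof (rule ccontr)
    assume nc: "\<not> ?thesis"
    define S where "S = {v. d t v \<le> enat r}"
    have fS: "finite S"
    proof (rule finite_subset)
      show "S \<subseteq> insert t (src ` A \<union> tgt ` A)"
      proof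
        fix v assume "v \<in> S"
        then obtain n where "d t v = enat n" unfolding S_def by (cases "d t v") auto
        then show "v \<in> insert t (src ` A \<union> tgt ` A)" using edist_fin_endpoint d_def by fastforce
      qed
      show "finite (insert t (src ` A \<union> tgt ` A))" using fN by simp
    qed
    have tS: "t \<in> S" unfolding S_def d_def by (simp add: edist_refl)
    have step: "d t y \<le> d t x + 1" if "e \<in> A" "{x,y} = {src e, tgt e}" for e x y
    proof -
      have ed: "d (src e) (tgt e) \<le> 1" "d (tgt e) (src e) \<le> 1"
        using edist_edge[OF that(1), of src tgt] edist_sym'[of src tgt A] d_def by metis+
      have "(x = src e \<and> y = tgt e) \<or> (x = tgt e \<and> y = src e)"
        using that(2) doubleton_eq_iff by metis
      then have "d x y \<le> 1" using ed by blast
      then show "d t y \<le> d t x + 1" using edist_tri[of src tgt A t y x] d_def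
        by (metis (no_types, lifting) add_left_mono order_trans)
    qed
    have cross: False if H: "e \<in> A" "d t x \<le> enat r" "\<not> d t y \<le> enat r" "{x,y} = {src e, tgt e}" for e x y
    proof -
      obtain n where n: "d t x = enat n" "n \<le> r" using H(2) by (cases "d t x") auto
      have "d t y \<le> enat (Suc n)" using step[OF H(1,4)] n by (simp add: eSuc_enat[symmetric] plus_1_eSuc)
      then obtain m where m: "d t y = enat m" "m \<le> Suc n" by (cases "d t y") auto
      have "m > r" using H(3) m by simp
      hence nm: "n = r" "m = Suc r" using n m by auto
      have "(x = src e \<and> y = tgt e) \<or> (x = tgt e \<and> y = src e)"
        using H(4) doubleton_eq_iff by metis
      then show False using nc H(1) n(1) m(1) nm by blast
    qed
    have same: "{e\<in>A. src e \<in> S} = {e\<in>A. tgt e \<in> S}"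
      using cross unfolding S_def by blast
    have "(\<Sum>v\<in>S. deg src tgt A v) = card {e\<in>A. src e \<in> S} + card {e\<in>A. tgt e \<in> S}"
      unfolding deg_def sum.distrib using sum_card_fiber[OF fN(2) fS] by metis
    hence evS: "even (\<Sum>v\<in>S. deg src tgt A v)" using same by simp
    have "(\<Sum>v\<in>S. deg src tgt A v) = deg src tgt A t + (\<Sum>v\<in>S-{t}. deg src tgt A v)"
      using fS tS sum.remove by metis
    moreover have "even (\<Sum>v\<in>S-{t}. deg src tgt A v)"
    proof (rule dvd_sum)
      fix v assume v: "v \<in> S - {t}"
      show "even (deg src tgt A v)"
      proof (rule ccontr)
        assume "odd (deg src tgt A v)"
        hence "v \<in> T" using oddA by blast
        hence d1: "enat \<Delta> \<le> d t v" using far t v by blast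
        have d2: "d t v \<le> enat r" using v S_def by blast
        have "enat \<Delta> \<le> enat r" using d1 d2 by (rule order_trans)
        then show False using r L_def by simp
      qed
    qed
    moreover have "odd (deg src tgt A t)" using oddA t by blast
    ultimately show False using evS by simp
  qed
  obtain g where g: "\<And>t r. t \<in> T \<Longrightarrow> r < L \<Longrightarrow> g t r \<in> A \<and>
      ((d t (src (g t r)) = enat r \<and> d t (tgt (g t r)) = enat (Suc r)) \<or>
       (d t (tgt (g t r)) = enat r \<and> d t (src (g t r)) = enat (Suc r)))"
    using layer by metis
  have inj: "inj_on (\<lambda>(t,r). g t r) (T \<times> {..<L})"
  proof (rule inj_onI, clarify)
    fix t r t' r'
    assume a: "t \<in> T" "r < L" "t' \<in> T" "r' < L" and eq: "g t r = g t' r'"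
    define e where "e = g t r"
    have ge: "g t r \<in> A \<and>
      ((d t (src e) = enat r \<and> d t (tgt e) = enat (Suc r)) \<or>
       (d t (tgt e) = enat r \<and> d t (src e) = enat (Suc r)))" using g[OF a(1,2)] e_def by simp
    have ge': "(d t' (src e) = enat r' \<and> d t' (tgt e) = enat (Suc r')) \<or>
       (d t' (tgt e) = enat r' \<and> d t' (src e) = enat (Suc r'))" using g[OF a(3,4)] e_def eq by simp
    obtain z where z: "d t z = enat r" "d t' z \<le> enat (Suc r')" using ge ge' by force
    have "t = t'"
    proof (rule ccontr)
      assume "t \<noteq> t'"
      hence "enat \<Delta> \<le> d t t'" using far a by blast
      also have "\<dots> \<le> d t z + d z t'" unfolding d_def by (rule edist_tri)
      also have "\<dots> \<le> enat r + enat (Suc r')" using z edist_sym'[of src tgt A z t'] d_def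
        by (metis add_left_mono)
      finally have "\<Delta> \<le> r + Suc r'" by simp
      thus False using a(2,4) L_def by simp
    qed
    then show "t = t' \<and> r = r'" using ge ge' by auto
  qed
  have "card (T \<times> {..<L}) \<le> card A"
  proof (rule card_inj_on_le[OF inj _ fN(2)])
    show "(\<lambda>(t, r). g t r) ` (T \<times> {..<L}) \<subseteq> A" using g by auto
  qed
  hence "2 * card N * L \<le> card A" using cardT by (simp add: card_cartesian_product)
  moreover have "\<Delta> * card N \<le> (2 * L + 1) * card N" using L_def by (intro mult_right_mono) auto
  ultimately show ?thesis using cardE N_def by (simp add: algebra_simps)
qed
end
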